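(* Let $z>0$ and $\mu\in\left(-\frac{5}{2},-\frac{1}{2}\right)$ with $\mu\neq-\frac{3}{2}$. Then $$\left[s_{\mu,\frac{1}{2}}(z)\right]^2-s_{\mu-1,\frac{1}{2}}(z)\,s_{\mu+1,\frac{1}{2}}(z)>\frac{1}{\frac{1}{2}-\mu}\left[s_{\mu,\frac{1}{2}}(z)\right]^2,$$ where $s_{\mu,\nu}$ denotes the Lommel function of the first kind.
   Context: The Lommel function of the first kind $s_{\mu,\nu}$ is the particular solution of the inhomogeneous Bessel equation $z^2y''+zy'+(z^2-\nu^2)y=z^{\mu+1}$ given by $$s_{\mu,\nu}(z)=\frac{z^{\mu+1}}{(\mu-\nu+1)(\mu+\nu+1)}\,{}_{1}F_{2}\left(1;\frac{\mu-\nu+3}{2},\frac{\mu+\nu+3}{2};-\frac{z^2}{4}\right),$$ where ${}_1F_2(a;b_1,b_2;x)=\sum_{n\ge0}\frac{(a)_n}{(b_1)_n(b_2)_n}\frac{x^n}{n!}$ and $(a)_n$ is the Pochhammer symbol; it is undefined when either of $\mu\pm\nu$ is an odd negative integer. For $z>0$, $z^{\mu+1}$ denotes the positive real power. *)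

theory Defs
  imports "HOL-Analysis.Analysis"
begin

definition hyp1F2 :: "real \<Rightarrow> real \<Rightarrow> real \<Rightarrow> real \<Rightarrow> real" where
  "hyp1F2 a b1 b2 x =
     (\<Sum>n. pochhammer a n / (pochhammer b1 n * pochhammer b2 n) * x ^ n / fact n)"

definition lommel_s :: "real \<Rightarrow> real \<Rightarrow> real \<Rightarrow> real" where
  "lommel_s mu nu z =
     z powr (mu + 1) / ((mu - nu + 1) * (mu + nu + 1)) *
     hyp1F2 1 ((mu - nu + 3) / 2) ((mu + nu + 3) / 2) (- (z ^ 2) / 4)"

end

theory Submission imports Defs begin

definition xc :: "real \<Rightarrow> nat \<Rightarrow> real" where
  "xc b k = (if even k then (-1)^(k div 2) else 0) / pochhammer b k"
definition yc :: "real \<Rightarrow> nat \<Rightarrow> real" where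
  "yc b k = (if odd k then (-1)^(k div 2) else 0) / pochhammer b k"
definition XX :: "real \<Rightarrow> real \<Rightarrow> real" where
  "XX b t = (\<Sum>k. xc b k * t^k)"
definition YY :: "real \<Rightarrow> real \<Rightarrow> real" where
  "YY b t = (\<Sum>k. yc b k * t^k)"

lemma summable_g: "summable (\<lambda>n. \<bar>t\<bar>^n / \<bar>pochhammer (b::real) n\<bar>)"
proof (rule summable_ratio_test[where c="1/2" and N="nat (ceiling (2*\<bar>t\<bar> + \<bar>b\<bar>)) + 1"])
  fix n assume n: "n \<ge> nat (ceiling (2*\<bar>t\<bar> + \<bar>b\<bar>)) + 1"
  hence nn: "real n \<ge> 2*\<bar>t\<bar> + \<bar>b\<bar> + 1" by linarith
  have bn: "\<bar>b + real n\<bar> \<ge> 2*\<bar>t\<bar> + 1" using nn by linarith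
  have "norm (\<bar>t\<bar>^Suc n / \<bar>pochhammer b (Suc n)\<bar>) = (\<bar>t\<bar>^n / \<bar>pochhammer b n\<bar>) * (\<bar>t\<bar> / \<bar>b + real n\<bar>)"
    by (simp add: pochhammer_rec' abs_mult mult_ac)
  also have "\<dots> \<le> (\<bar>t\<bar>^n / \<bar>pochhammer b n\<bar>) * (1/2)"
    apply (rule mult_left_mono)
    using bn by (auto simp: field_simps)
  finally show "norm (\<bar>t\<bar>^Suc n / \<bar>pochhammer b (Suc n)\<bar>) \<le> 1/2 * norm (\<bar>t\<bar>^n / \<bar>pochhammer b n\<bar>)"
    by simp
qed simp

lemma summable_xc: "summable (\<lambda>k. xc b k * t^k)"
  apply (rule summable_comparison_test[OF _ summable_g[of t b]])
  by (auto simp: xc_def abs_mult power_abs divide_simps)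

lemma summable_yc: "summable (\<lambda>k. yc b k * t^k)"
  apply (rule summable_comparison_test[OF _ summable_g[of t b]])
  by (auto simp: yc_def abs_mult power_abs divide_simps)

lemma XX_sums: "(\<lambda>k. xc b k * t^k) sums XX b t"
  using summable_xc unfolding XX_def by (simp add: summable_sums)
lemma YY_sums: "(\<lambda>k. yc b k * t^k) sums YY b t"
  using summable_yc unfolding YY_def by (simp add: summable_sums)

lemma XX_deriv: "(XX b has_field_derivative (\<Sum>n. diffs (xc b) n * t^n)) (at t)"
  unfolding XX_def[abs_def] by (rule termdiffs_strong_converges_everywhere[OF summable_xc])
lemma YY_deriv: "(YY b has_field_derivative (\<Sum>n. diffs (yc b) n * t^n)) (at t)"
  unfolding YY_def[abs_def] by (rule termdiffs_strong_converges_everywhere[OF summable_yc])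

lemma summable_diffs_xc: "summable (\<lambda>n. diffs (xc b) n * t^n)"
  by (rule termdiff_converges_all) (rule summable_xc)

lemma hyp_XX: "hyp1F2 1 (g/2) ((g+1)/2) (-(t^2)/4) = XX g t"
proof -
  have sm: "strict_mono (\<lambda>n::nat. 2*n)" by (rule strict_monoI) simp
  have "(\<lambda>n. xc g (2*n) * t^(2*n)) sums XX g t"
  proof (subst sums_mono_reindex[OF sm, of "\<lambda>k. xc g k * t^k"])
    fix n :: nat assume "n \<notin> range (\<lambda>n::nat. 2*n)"
    hence "odd n" by (metis dvdE rangeI)
    thus "xc g n * t^n = 0" by (simp add: xc_def)
  qed (rule XX_sums)
  moreover have "(\<lambda>n. xc g (2*n) * t^(2*n)) =
     (\<lambda>n. pochhammer 1 n / (pochhammer (g/2) n * pochhammer ((g+1)/2) n) * (-(t^2)/4)^n / fact n)"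
  proof
    fix n
    have pd: "pochhammer g (2*n) = 4^n * pochhammer (g/2) n * pochhammer ((g+1)/2) n"
      using pochhammer_double[of "g/2" n] by (simp add: add_divide_distrib power_mult)
    have "(-(t^2)/4)^n = (((-1) * t^2)/4)^n" by simp
    also have "\<dots> = ((-1)^n * (t^2)^n) / 4^n" by (simp only: power_divide power_mult_distrib)
    also have "(t^2)^n = t^(2*n)" by (simp only: power_mult)
    finally have "(-(t^2)/4)^n = (-1)^n * t^(2*n) / 4^n" .
    thus "xc g (2*n) * t^(2*n) = pochhammer 1 n / (pochhammer (g/2) n * pochhammer ((g+1)/2) n) * (-(t^2)/4)^n / fact n"
      by (simp add: xc_def pd pochhammer_fact[symmetric])
  qed
  ultimately have "(\<lambda>n. pochhammer 1 n / (pochhammer (g/2) n * pochhammer ((g+1)/2) n) * (-(t^2)/4)^n / fact n) sums XX g t"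
    by (simp only:)
  thus ?thesis unfolding hyp1F2_def by (rule sums_unique[symmetric])
qed

lemma YY_XX: "YY b t = t / b * XX (b+1) t"
proof -
  have "(\<lambda>k. yc b (Suc k) * t^(Suc k)) sums (t / b * XX (b+1) t)"
  proof -
    have "(\<lambda>k. t / b * (xc (b+1) k * t^k)) sums (t / b * XX (b+1) t)"
      by (rule sums_mult[OF XX_sums])
    moreover have "(\<lambda>k. t / b * (xc (b+1) k * t^k)) = (\<lambda>k. yc b (Suc k) * t^(Suc k))"
      by (auto simp: xc_def yc_def pochhammer_rec)
    ultimately show ?thesis by simp
  qed
  hence "(\<lambda>k. yc b k * t^k) sums (t / b * XX (b+1) t)"
    by (subst (asm) sums_Suc_iff) (simp add: yc_def)
  with YY_sums show ?thesis by (rule sums_unique2)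
qed

lemma XX_rec: "XX b t = 1 - t^2 / (b*(b+1)) * XX (b+2) t"
proof -
  have "(\<lambda>k. - (t^2 / (b*(b+1))) * (xc (b+2) k * t^k)) sums (- (t^2 / (b*(b+1))) * XX (b+2) t)"
    by (rule sums_mult[OF XX_sums])
  moreover have "(\<lambda>k. - (t^2 / (b*(b+1))) * (xc (b+2) k * t^k)) = (\<lambda>k. xc b (Suc (Suc k)) * t^(Suc (Suc k)))"
  proof
    fix k
    have p: "pochhammer b (Suc (Suc k)) = b * (b+1) * pochhammer (b+2) k"
      by (simp add: pochhammer_rec add.assoc)
    show "- (t^2 / (b*(b+1))) * (xc (b+2) k * t^k) = xc b (Suc (Suc k)) * t^(Suc (Suc k))"
      unfolding xc_def p by (cases "even k") (simp_all add: power2_eq_square)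
  qed
  ultimately have "(\<lambda>k. xc b (Suc (Suc k)) * t^(Suc (Suc k))) sums (- (t^2 / (b*(b+1))) * XX (b+2) t)" by simp
  hence "(\<lambda>k. xc b k * t^k) sums (- (t^2 / (b*(b+1))) * XX (b+2) t + 1)"
    by (subst (asm) sums_Suc_iff, subst (asm) sums_Suc_iff) (simp add: xc_def)
  with XX_sums[of b t] show ?thesis by (simp add: sums_iff)
qed

lemma aux_id:
  fixes d P s x b :: real
  assumes "d \<noteq> 0" "P \<noteq> 0" "d = b + x"
  shows "(x+1) * (s/(d*P)) = (1-b)*(s/(d*P)) + s/P"
proof -
  have e: "(x+1) = (1-b) + d" using assms(3) by simp
  have "(x+1) * (s/(d*P)) = (1-b)*(s/(d*P)) + d*(s/(d*P))"
    by (simp only: e distrib_right)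
  also have "d*(s/(d*P)) = s/P" using assms(1,2) by simp
  finally show ?thesis .
qed

lemma coef1:
  assumes hb: "\<And>n::nat. b + real n \<noteq> 0"
  shows "real (Suc n) * xc b (Suc n) = (1-b) * xc b (Suc n) - yc b n"
proof (cases "pochhammer b n = 0")
  case True
  hence "pochhammer b (Suc n) = 0" by (simp add: pochhammer_rec')
  with True show ?thesis by (simp add: xc_def yc_def)
next
  case False
  have p: "pochhammer b (Suc n) = (b + real n) * pochhammer b n" by (simp add: pochhammer_rec')
  show ?thesis
  proof (cases "even n")
    case True thus ?thesis by (simp add: xc_def yc_def)
  next
    case False
    then obtain m where n: "n = 2*m+1" by (metis oddE)
    have e: "Suc n div 2 = m + 1" "n div 2 = m" using n by auto
    have d: "b + real n \<noteq> 0" by (rule hb)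
    have "real (Suc n) * (- ((-1)^m) / ((b + real n) * pochhammer b n)) =
          (1-b) * (- ((-1)^m) / ((b + real n) * pochhammer b n)) - (-1)^m / pochhammer b n"
      using aux_id[where d="b + real n" and P="pochhammer b n" and x="real n" and b=b and s="- ((-1)^m)"] d \<open>pochhammer b n \<noteq> 0\<close> by (simp add: add.commute)
    thus ?thesis using n unfolding xc_def yc_def p e by simp
  qed
qed

lemma coef2:
  assumes hb: "\<And>n::nat. b + real n \<noteq> 0"
  shows "real (Suc n) * yc b (Suc n) = (1-b) * yc b (Suc n) + xc b n"
proof (cases "pochhammer b n = 0")
  case True
  hence "pochhammer b (Suc n) = 0" by (simp add: pochhammer_rec')
  with True show ?thesis by (simp add: xc_def yc_def)
next
  case False
  have p: "pochhammer b (Suc n) = (b + real n) * pochhammer b n" by (simp add: pochhammer_rec')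
  show ?thesis
  proof (cases "odd n")
    case True thus ?thesis by (simp add: xc_def yc_def)
  next
    case False
    then obtain m where n: "n = 2*m" by (metis evenE)
    have e: "Suc n div 2 = m" "n div 2 = m" using n by auto
    have d: "b + real n \<noteq> 0" by (rule hb)
    have "real (Suc n) * (((-1)^m) / ((b + real n) * pochhammer b n)) =
          (1-b) * (((-1)^m) / ((b + real n) * pochhammer b n)) + (-1)^m / pochhammer b n"
      using aux_id[where d="b + real n" and P="pochhammer b n" and x="real n" and b=b and s="(-1)^m"] d \<open>pochhammer b n \<noteq> 0\<close> by (simp add: add.commute)
    thus ?thesis using n unfolding xc_def yc_def p e by simp
  qed
qed

lemma ode1:
  assumes hb: "\<And>n::nat. b + real n \<noteq> 0"
  shows "t * (\<Sum>n. diffs (xc b) n * t^n) = (1-b) * (XX b t - 1) - t * YY b t"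
proof -
  have s1: "(\<lambda>n. t * (diffs (xc b) n * t^n)) sums (t * (\<Sum>n. diffs (xc b) n * t^n))"
    by (rule sums_mult[OF summable_sums[OF termdiff_converges_all[OF summable_xc]]])
  have a: "(\<lambda>n. xc b (Suc n) * t^(Suc n)) sums (XX b t - 1)"
    by (subst sums_Suc_iff) (use XX_sums[of b t] in \<open>simp add: xc_def\<close>)
  have s2: "(\<lambda>n. (1-b) * (xc b (Suc n) * t^(Suc n)) - t * (yc b n * t^n)) sums ((1-b) * (XX b t - 1) - t * YY b t)"
    by (rule sums_diff[OF sums_mult[OF a] sums_mult[OF YY_sums]])
  have "(\<lambda>n. t * (diffs (xc b) n * t^n)) = (\<lambda>n. (1-b) * (xc b (Suc n) * t^(Suc n)) - t * (yc b n * t^n))"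
  proof
    fix n
    have "t * (diffs (xc b) n * t^n) = (real (Suc n) * xc b (Suc n)) * t^(Suc n)"
      by (simp add: diffs_def)
    also have "\<dots> = (1-b) * (xc b (Suc n) * t^(Suc n)) - t * (yc b n * t^n)"
      by (simp only: coef1[OF hb]) (simp add: algebra_simps)
    finally show "t * (diffs (xc b) n * t^n) = (1-b) * (xc b (Suc n) * t^(Suc n)) - t * (yc b n * t^n)" .
  qed
  with s1 s2 show ?thesis by (metis sums_unique2)
qed

lemma ode2:
  assumes hb: "\<And>n::nat. b + real n \<noteq> 0"
  shows "t * (\<Sum>n. diffs (yc b) n * t^n) = (1-b) * YY b t + t * XX b t"
proof -
  have s1: "(\<lambda>n. t * (diffs (yc b) n * t^n)) sums (t * (\<Sum>n. diffs (yc b) n * t^n))"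
    by (rule sums_mult[OF summable_sums[OF termdiff_converges_all[OF summable_yc]]])
  have a: "(\<lambda>n. yc b (Suc n) * t^(Suc n)) sums (YY b t)"
    by (subst sums_Suc_iff) (use YY_sums[of b t] in \<open>simp add: yc_def\<close>)
  have s2: "(\<lambda>n. (1-b) * (yc b (Suc n) * t^(Suc n)) + t * (xc b n * t^n)) sums ((1-b) * YY b t + t * XX b t)"
    by (rule sums_add[OF sums_mult[OF a] sums_mult[OF XX_sums]])
  have "(\<lambda>n. t * (diffs (yc b) n * t^n)) = (\<lambda>n. (1-b) * (yc b (Suc n) * t^(Suc n)) + t * (xc b n * t^n))"
  proof
    fix n
    have "t * (diffs (yc b) n * t^n) = (real (Suc n) * yc b (Suc n)) * t^(Suc n)"
      by (simp add: diffs_def)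
    also have "\<dots> = (1-b) * (yc b (Suc n) * t^(Suc n)) + t * (xc b n * t^n)"
      by (simp only: coef2[OF hb]) (simp add: algebra_simps)
    finally show "t * (diffs (yc b) n * t^n) = (1-b) * (yc b (Suc n) * t^(Suc n)) + t * (xc b n * t^n)" .
  qed
  with s1 s2 show ?thesis by (metis sums_unique2)
qed

lemma XX_0: "XX b 0 = 1"
  unfolding XX_def powser_zero by (simp add: xc_def)

lemma XX_cont: "isCont (XX b) t"
  by (rule DERIV_isCont[OF XX_deriv])

lemma N_gt1:
  fixes b z :: real
  assumes b1: "-1 < b" and b2: "b < 1" and b0: "b \<noteq> 0" and z: "z > 0"
  shows "XX b z ^ 2 + YY b z ^ 2 > 1"
proof -
  define c where "c = 1 - b"
  have c: "c > 0" using b2 by (simp add: c_def)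
  have hb: "\<And>n::nat. b + real n \<noteq> 0"
  proof -
    fix n :: nat show "b + real n \<noteq> 0"
      using b0 b1 by (cases n) auto
  qed
  define N where "N t = XX b t ^ 2 + YY b t ^ 2" for t
  define E where "E t = - XX (b+2) t / (b*(b+1)) * (XX b t + 1) + (XX (b+1) t / b)^2" for t
  have NE: "N t - 1 = t^2 * E t" if "t \<noteq> 0" for t
  proof -
    have x: "XX b t - 1 = (-(t^2)) * XX (b+2) t / (b*(b+1))" using XX_rec[of b t] by simp
    have y: "YY b t = t * (XX (b+1) t / b)" using YY_XX[of b t] by simp
    have "N t - 1 = (XX b t - 1) * (XX b t + 1) + YY b t ^ 2"
      unfolding N_def by (simp add: algebra_simps power2_eq_square)
    also have "\<dots> = t^2 * E t" unfolding x y E_def by (simp add: algebra_simps power2_eq_square)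
    finally show ?thesis .
  qed
  have E0: "E 0 > 0"
  proof -
    have bb: "b + 1 > 0" using b1 by simp
    have "E 0 = -2 / (b*(b+1)) + 1/b^2" unfolding E_def XX_0 by (simp add: power_divide)
    also have "\<dots> = (1 - b) / (b^2 * (b+1))"
    proof -
      have n: "b*(b+1) \<noteq> 0" "b^2*(b+1) \<noteq> 0" using b0 bb by auto
      show ?thesis using n b0 bb by (simp add: divide_simps) (simp add: algebra_simps power2_eq_square)
    qed
    also have "\<dots> > 0" using b0 bb b2 by (intro divide_pos_pos mult_pos_pos) auto
    finally show ?thesis .
  qed
  have Ec: "isCont E 0" unfolding E_def[abs_def]
    apply (intro continuous_intros XX_cont) using b0 b1 by auto
  have "eventually (\<lambda>t. 0 < E t) (at 0)"
    using order_tendstoD(1)[OF Ec[unfolded isCont_def] E0] by simp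
  then obtain d where d: "d > 0" and dE: "\<And>t. t \<noteq> 0 \<Longrightarrow> dist t 0 < d \<Longrightarrow> 0 < E t"
    unfolding eventually_at by blast
  define e where "e = min (d/2) z"
  have e: "e > 0" "e \<le> z" using d z by (auto simp: e_def)
  have "E e > 0" using dE[of e] e d by (auto simp: e_def)
  hence "e^2 * E e > 0" using e by simp
  hence Ne: "N e > 1" using NE[of e] e by simp
  define q where "q t = t powr (-c) * (N t - 1)" for t
  define X' where "X' t = (\<Sum>n. diffs (xc b) n * t^n)" for t
  define Y' where "Y' t = (\<Sum>n. diffs (yc b) n * t^n)" for t
  have dq: "\<exists>y. DERIV q t :> y \<and> y \<ge> 0" if t: "e \<le> t" for t
  proof -
    have tp: "t > 0" using t e by simp
    have dN: "DERIV N t :> 2 * XX b t * X' t + 2 * YY b t * Y' t"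
      unfolding N_def[abs_def] X'_def Y'_def
      by (auto intro!: derivative_eq_intros XX_deriv YY_deriv simp: power2_eq_square)
    have dq: "DERIV q t :> (-c) * t powr (-c - 1) * (N t - 1) + t powr (-c) * (2 * XX b t * X' t + 2 * YY b t * Y' t)"
      unfolding q_def[abs_def]
      by (rule derivative_eq_intros has_real_derivative_powr[OF tp] dN DERIV_const refl | simp)+
    have o1: "t * X' t = c * (XX b t - 1) - t * YY b t" unfolding X'_def c_def by (rule ode1[OF hb])
    have o2: "t * Y' t = c * YY b t + t * XX b t" unfolding Y'_def c_def by (rule ode2[OF hb])
    have pw: "t powr (-c) = t * t powr (-c - 1)"
    proof -
      have "t powr (-c) = t powr (1 + (-c - 1))" by simp
      also have "\<dots> = t powr 1 * t powr (-c - 1)" by (rule powr_add)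
      finally show ?thesis using tp by simp
    qed
    have "(-c) * t powr (-c - 1) * (N t - 1) + t powr (-c) * (2 * XX b t * X' t + 2 * YY b t * Y' t)
        = t powr (-c - 1) * (-c * (N t - 1) + 2 * XX b t * (t * X' t) + 2 * YY b t * (t * Y' t))"
      unfolding pw by (simp add: algebra_simps)
    also have "\<dots> = t powr (-c - 1) * (c * ((XX b t - 1)^2 + YY b t ^ 2))"
      unfolding o1 o2 N_def by (simp add: algebra_simps power2_eq_square)
    also have "\<dots> \<ge> 0" using c by simp
    finally show ?thesis using dq by blast
  qed
  have "q e \<le> q z"
    by (rule DERIV_nonneg_imp_nondecreasing[OF e(2)]) (use dq in auto)
  moreover have "q e > 0" using Ne e by (simp add: q_def)
  ultimately have "q z > 0" by simp
  hence "N z - 1 > 0" using z by (simp add: q_def zero_less_mult_iff)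
  thus ?thesis by (simp add: N_def)
qed

lemma lommel_XX: "lommel_s m (1/2) z = z powr (m+1) / ((m+1/2)*(m+3/2)) * XX (m+5/2) z"
proof -
  have e: "(m - 1/2 + 3)/2 = (m+5/2)/2" "(m + 1/2 + 3)/2 = ((m+5/2)+1)/2"
          "m - 1/2 + 1 = m + 1/2" "m + 1/2 + 1 = m + 3/2" by simp_all
  show ?thesis unfolding lommel_s_def e hyp_XX ..
qed

lemma alg:
  fixes u v P X Y :: real
  assumes "u \<noteq> 0" "v \<noteq> 0" "v = 1 - u"
  shows "(P*Y/u)^2 - P*X/((-v) * u) * (P*(1-X)) - 1/v * (P*Y/u)^2 = P^2*(-u)/(u^2 * v) * (Y^2-X+X^2)"
  using assms(1,2) apply (simp add: divide_simps)
  unfolding assms(3) by (simp add: algebra_simps power2_eq_square)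

theorem theorem1:
  fixes z mu :: real
  assumes "z > 0" and "-5/2 < mu" and "mu < -1/2" and "mu \<noteq> -3/2"
  shows "(lommel_s mu (1/2) z)^2 - lommel_s (mu - 1) (1/2) z * lommel_s (mu + 1) (1/2) z
           > 1 / (1/2 - mu) * (lommel_s mu (1/2) z)^2"
proof -
  define b where "b = mu + 3/2"
  have mu: "mu = b - 3/2" by (simp add: b_def)
  have b1: "-1 < b" and b2: "b < 1" and b0: "b \<noteq> 0" using assms by (auto simp: b_def)
  have z: "z > 0" by fact
  define X where "X = XX b z"
  define Y where "Y = YY b z"
  define P where "P = z powr mu"
  have P: "P > 0" using z by (simp add: P_def)
  have N: "X^2 + Y^2 > 1" unfolding X_def Y_def by (rule N_gt1[OF b1 b2 b0 z])
  have bb: "b + 1 \<noteq> 0" using b1 by simp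
  have X1: "XX (b+1) z = b * Y / z" using YY_XX[of b z] z b0 by (simp add: Y_def field_simps)
  have X2: "XX (b+2) z = (1 - X) * (b*(b+1)) / z^2"
  proof -
    have w: "b*(b+1) \<noteq> 0" using b0 bb by simp
    have e: "z^2 / (b*(b+1)) * XX (b+2) z = 1 - X" using XX_rec[of b z] by (simp add: X_def)
    have "(1 - X) * (b*(b+1)) / z^2 = (z^2 / (b*(b+1)) * XX (b+2) z) * (b*(b+1)) / z^2"
      by (simp only: e)
    also have "\<dots> = XX (b+2) z" using w z by simp
    finally show ?thesis by simp
  qed
  have zp1: "z powr (mu + 1) = P * z" using z by (simp add: P_def powr_add)
  have zp2: "z powr (mu + 2) = P * z^2" using z by (simp add: P_def powr_add power2_eq_square)
  have s0: "lommel_s mu (1/2) z = P * Y / (b - 1)"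
  proof -
    have e: "mu+5/2 = b+1" "mu+1/2 = b-1" "mu+3/2 = b" by (simp_all add: b_def)
    have "lommel_s mu (1/2) z = z powr (mu+1) / ((b-1)*b) * XX (b+1) z"
      unfolding lommel_XX e ..
    also have "\<dots> = P * z / ((b-1)*b) * (b * Y / z)" by (simp only: zp1 X1)
    also have "\<dots> = P * Y / (b - 1)" using z b0 b2 by (simp add: field_simps)
    finally show ?thesis .
  qed
  have sm: "lommel_s (mu - 1) (1/2) z = P * X / ((b-2)*(b-1))"
  proof -
    have e: "mu-1+5/2 = b" "mu-1+1/2 = b-2" "mu-1+3/2 = b-1" "mu-1+1 = mu" by (simp_all add: b_def)
    have "lommel_s (mu - 1) (1/2) z = z powr mu / ((b-2)*(b-1)) * XX b z"
      unfolding lommel_XX e ..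
    thus ?thesis by (simp add: P_def X_def)
  qed
  have sp: "lommel_s (mu + 1) (1/2) z = P * (1 - X)"
  proof -
    have e: "mu+1+5/2 = b+2" "mu+1+1/2 = b" "mu+1+3/2 = b+1" "mu+1+1 = mu+2" by (simp_all add: b_def)
    have "lommel_s (mu + 1) (1/2) z = z powr (mu+2) / (b*(b+1)) * XX (b+2) z"
      unfolding lommel_XX e ..
    also have "\<dots> = P * z^2 / (b*(b+1)) * ((1 - X) * (b*(b+1)) / z^2)" by (simp only: zp2 X2)
    also have "\<dots> = P * (1 - X)"
    proof -
      have w: "b*(b+1) \<noteq> 0" "z^2 \<noteq> 0" using b0 bb z by auto
      show ?thesis using w by simp
    qed
    finally show ?thesis .
  qed
  have key: "Y^2 - X + X^2 > 0"
  proof (cases "X \<le> 1")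
    case True thus ?thesis using N by linarith
  next
    case False
    hence "X^2 > X" by (simp add: power2_eq_square)
    moreover have "Y^2 \<ge> 0" by simp
    ultimately show ?thesis by linarith
  qed
  have h: "1/2 - mu = 2 - b" by (simp add: mu)
  have d1: "b - 1 \<noteq> 0" "b - 2 \<noteq> 0" "2 - b \<noteq> 0" using b2 by auto
  have EQ: "(lommel_s mu (1/2) z)^2 - lommel_s (mu - 1) (1/2) z * lommel_s (mu + 1) (1/2) z
         - 1 / (1/2 - mu) * (lommel_s mu (1/2) z)^2
       = P^2 * (1 - b) / ((b-1)^2 * (2-b)) * (Y^2 - X + X^2)"
  proof -
    have e1: "b - 2 = - (2 - b)" by simp
    have e2: "1 - b = - (b - 1)" by simp
    have e3: "2 - b = 1 - (b - 1)" by simp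
    have a: "(P*Y/(b-1))^2 - P*X/((-(2-b)) * (b-1)) * (P*(1-X)) - 1/(2-b) * (P*Y/(b-1))^2
        = P^2*(-(b-1))/((b-1)^2 * (2-b)) * (Y^2-X+X^2)"
      by (rule alg[OF d1(1) d1(3) e3])
    show ?thesis unfolding s0 sm sp h e1 e2 by (rule a)
  qed
  have pos: "P^2 * (1 - b) / ((b-1)^2 * (2-b)) * (Y^2 - X + X^2) > 0"
  proof -
    have "P^2 > 0" using P by simp
    moreover have "1 - b > 0" using b2 by simp
    moreover have "(b-1)^2 * (2-b) > 0" using b2 by simp
    ultimately have "P^2 * (1 - b) / ((b-1)^2 * (2-b)) > 0" by simp
    thus ?thesis using key by (rule mult_pos_pos)
  qed
  show ?thesis using EQ pos by linarith
qed
end
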